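(* The following hold: (1) every reduced ring is NCSUC; (2) every local ring is NCSUC; (3) if $R$ is a domain, then the upper triangular matrix ring $\mathrm{T}_2(R)$ is NCSUC; (4) for any nonzero ring $R$, the matrix ring $\mathrm{M}_2(R)$ is not NCSUC.
   Context: All rings are associative with identity $1$. For a ring $R$, $\mathrm{Id}(R)$, $U(R)$, $\mathrm{Nil}(R)$ denote the sets of idempotents, units and nilpotent elements. An element $a\in R$ is nil-clean if $a=e+q$ with $e\in \mathrm{Id}(R)$, $q\in\mathrm{Nil}(R)$. An element $a$ is uniquely strongly clean if there is exactly one $e\in\mathrm{Id}(R)$ such that $a-e\in U(R)$ and $ae=ea$. A ring is NCSUC if every nil-clean element is uniquely strongly clean. A ring is reduced if it has no nonzero nilpotent elements; a domain is a nonzero ring without zero divisors; $\mathrm{T}_2(R)$ is the ring of $2\times 2$ upper triangular matrices over $R$. *)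

theory Defs
  imports "HOL-Algebra.Ideal"
begin

definition idempotents :: "('a, 'b) ring_scheme \<Rightarrow> 'a set" where
  "idempotents R = {e \<in> carrier R. e \<otimes>\<^bsub>R\<^esub> e = e}"

definition nilpotents :: "('a, 'b) ring_scheme \<Rightarrow> 'a set" where
  "nilpotents R = {q \<in> carrier R. \<exists>n::nat. q [^]\<^bsub>R\<^esub> n = \<zero>\<^bsub>R\<^esub>}"

definition nil_clean_elem :: "('a, 'b) ring_scheme \<Rightarrow> 'a \<Rightarrow> bool" where
  "nil_clean_elem R a \<longleftrightarrow>
     (\<exists>e q. e \<in> idempotents R \<and> q \<in> nilpotents R \<and> a = e \<oplus>\<^bsub>R\<^esub> q)"

definition uniquely_strongly_clean :: "('a, 'b) ring_scheme \<Rightarrow> 'a \<Rightarrow> bool" where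
  "uniquely_strongly_clean R a \<longleftrightarrow>
     (\<exists>!e. e \<in> idempotents R \<and> a \<ominus>\<^bsub>R\<^esub> e \<in> Units R
            \<and> a \<otimes>\<^bsub>R\<^esub> e = e \<otimes>\<^bsub>R\<^esub> a)"

definition NCSUC :: "('a, 'b) ring_scheme \<Rightarrow> bool" where
  "NCSUC R \<longleftrightarrow>
     (\<forall>a \<in> carrier R. nil_clean_elem R a \<longrightarrow> uniquely_strongly_clean R a)"

definition reduced_ring :: "('a, 'b) ring_scheme \<Rightarrow> bool" where
  "reduced_ring R \<longleftrightarrow> nilpotents R \<subseteq> {\<zero>\<^bsub>R\<^esub>}"

definition nc_domain :: "('a, 'b) ring_scheme \<Rightarrow> bool" where
  "nc_domain R \<longleftrightarrow> \<one>\<^bsub>R\<^esub> \<noteq> \<zero>\<^bsub>R\<^esub> \<and>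
     (\<forall>a \<in> carrier R. \<forall>b \<in> carrier R. a \<otimes>\<^bsub>R\<^esub> b = \<zero>\<^bsub>R\<^esub> \<longrightarrow> a = \<zero>\<^bsub>R\<^esub> \<or> b = \<zero>\<^bsub>R\<^esub>)"

definition left_ideal :: "'a set \<Rightarrow> ('a, 'b) ring_scheme \<Rightarrow> bool" where
  "left_ideal I R \<longleftrightarrow> additive_subgroup I R \<and>
     (\<forall>r \<in> carrier R. \<forall>x \<in> I. r \<otimes>\<^bsub>R\<^esub> x \<in> I)"

definition maximal_left_ideal :: "'a set \<Rightarrow> ('a, 'b) ring_scheme \<Rightarrow> bool" where
  "maximal_left_ideal I R \<longleftrightarrow> left_ideal I R \<and> I \<noteq> carrier R \<and>
     (\<forall>J. left_ideal J R \<and> I \<subseteq> J \<longrightarrow> J = I \<or> J = carrier R)"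

definition local_ring :: "('a, 'b) ring_scheme \<Rightarrow> bool" where
  "local_ring R \<longleftrightarrow> (\<exists>!I. maximal_left_ideal I R)"

text \<open>2x2 matrices over R, a matrix (a b; c d) represented as (a, b, c, d).\<close>
definition M2 :: "('a, 'b) ring_scheme \<Rightarrow> ('a \<times> 'a \<times> 'a \<times> 'a) ring" where
  "M2 R = \<lparr> carrier = carrier R \<times> carrier R \<times> carrier R \<times> carrier R,
     mult = (\<lambda>(a, b, c, d) (a', b', c', d').
       (a \<otimes>\<^bsub>R\<^esub> a' \<oplus>\<^bsub>R\<^esub> b \<otimes>\<^bsub>R\<^esub> c', a \<otimes>\<^bsub>R\<^esub> b' \<oplus>\<^bsub>R\<^esub> b \<otimes>\<^bsub>R\<^esub> d',
        c \<otimes>\<^bsub>R\<^esub> a' \<oplus>\<^bsub>R\<^esub> d \<otimes>\<^bsub>R\<^esub> c', c \<otimes>\<^bsub>R\<^esub> b' \<oplus>\<^bsub>R\<^esub> d \<otimes>\<^bsub>R\<^esub> d')),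
     one = (\<one>\<^bsub>R\<^esub>, \<zero>\<^bsub>R\<^esub>, \<zero>\<^bsub>R\<^esub>, \<one>\<^bsub>R\<^esub>),
     zero = (\<zero>\<^bsub>R\<^esub>, \<zero>\<^bsub>R\<^esub>, \<zero>\<^bsub>R\<^esub>, \<zero>\<^bsub>R\<^esub>),
     add = (\<lambda>(a, b, c, d) (a', b', c', d').
       (a \<oplus>\<^bsub>R\<^esub> a', b \<oplus>\<^bsub>R\<^esub> b', c \<oplus>\<^bsub>R\<^esub> c', d \<oplus>\<^bsub>R\<^esub> d')) \<rparr>"

definition T2 :: "('a, 'b) ring_scheme \<Rightarrow> ('a \<times> 'a \<times> 'a \<times> 'a) ring" where
  "T2 R = (M2 R) \<lparr> carrier := carrier R \<times> carrier R \<times> {\<zero>\<^bsub>R\<^esub>} \<times> carrier R \<rparr>"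

end

theory Submission
  imports Defs
begin

lemma (in ring) unit_cancel:
  assumes "u \<in> Units R" "x \<in> carrier R" "u \<otimes> x = \<zero>" shows "x = \<zero>"
proof -
  obtain v where v: "v \<in> carrier R" "v \<otimes> u = \<one>" using assms(1) unfolding Units_def by blast
  have u: "u \<in> carrier R" using assms(1) unfolding Units_def by blast
  have "x = (v \<otimes> u) \<otimes> x" using v assms by simp
  also have "\<dots> = v \<otimes> (u \<otimes> x)" by (simp only: m_assoc v(1) u assms(2))
  also have "\<dots> = \<zero>" using assms v by simp
  finally show ?thesis .
qed

lemma (in ring) add_subgroupI':
  assumes "H \<subseteq> carrier R" "\<zero> \<in> H" "\<And>a. a\<in>H \<Longrightarrow> \<ominus>a \<in> H" "\<And>a b. a\<in>H \<Longrightarrow> b\<in>H \<Longrightarrow> a \<oplus> b \<in> H"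
  shows "additive_subgroup H R"
  apply (rule additive_subgroupI, rule add.subgroupI)
  using assms by (auto simp: a_inv_def[symmetric])

lemma (in ring) idem_usc:
  assumes a: "a \<in> idempotents R" shows "uniquely_strongly_clean R a"
proof -
  have ac: "a \<in> carrier R" and aa: "a \<otimes> a = a" using a by (auto simp: idempotents_def)
  define f where "f = \<one> \<ominus> a"
  have fc: "f \<in> carrier R" using ac by (simp add: f_def)
  have "f \<otimes> f = \<one> \<ominus> a \<ominus> a \<oplus> a \<otimes> a" unfolding f_def using ac by (algebra; simp add: ring_simprules)
  also have "\<dots> = f" unfolding f_def using ac aa by (algebra; simp add: ring_simprules)
  finally have ff: "f \<otimes> f = f" .
  have "(a \<ominus> f) \<otimes> (a \<ominus> f) = a \<otimes> a \<oplus> a \<otimes> a \<oplus> a \<otimes> a \<oplus> a \<otimes> a \<ominus> a \<ominus> a \<ominus> a \<ominus> a \<oplus> \<one>"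
    unfolding f_def using ac by (algebra; simp add: ring_simprules)
  also have "\<dots> = \<one>" using ac aa by (simp add: ring_simprules)
  finally have uu: "(a \<ominus> f) \<otimes> (a \<ominus> f) = \<one>" .
  have unit: "a \<ominus> f \<in> Units R" unfolding Units_def using uu ac fc by auto
  have comm: "a \<otimes> f = f \<otimes> a" unfolding f_def using ac by (algebra; simp add: ring_simprules)
  show ?thesis unfolding uniquely_strongly_clean_def
  proof (rule ex1I[of _ f])
    show "f \<in> idempotents R \<and> a \<ominus> f \<in> Units R \<and> a \<otimes> f = f \<otimes> a"
      using fc ff unit comm by (simp add: idempotents_def)
  next
    fix g assume g: "g \<in> idempotents R \<and> a \<ominus> g \<in> Units R \<and> a \<otimes> g = g \<otimes> a"
    have gc: "g \<in> carrier R" and gg: "g \<otimes> g = g" and ga: "g \<otimes> a = a \<otimes> g" and gu: "a \<ominus> g \<in> Units R"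
      using g by (auto simp: idempotents_def)
    have agg: "a \<otimes> g \<otimes> g = a \<otimes> g" using ac gc gg by (simp add: m_assoc)
    have aag: "a \<otimes> a \<otimes> g = a \<otimes> g" using aa by simp
    have gag: "g \<otimes> a \<otimes> g = a \<otimes> g" using ga agg by simp
    have "(a \<ominus> g) \<otimes> (a \<otimes> g) = a \<otimes> a \<otimes> g \<ominus> g \<otimes> a \<otimes> g" using ac gc by (algebra; simp add: ring_simprules)
    also have "\<dots> = \<zero>" using aag gag ac gc by (simp add: ring_simprules)
    finally have ag0: "a \<otimes> g = \<zero>" using unit_cancel[OF gu] ac gc by (meson m_closed)
    have "(a \<ominus> g) \<otimes> (\<one> \<ominus> a \<ominus> g \<oplus> a \<otimes> g) =
       a \<ominus> a \<otimes> a \<ominus> a \<otimes> g \<oplus> a \<otimes> a \<otimes> g \<ominus> g \<oplus> g \<otimes> a \<oplus> g \<otimes> g \<ominus> g \<otimes> a \<otimes> g"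
      using ac gc by (algebra; simp add: ring_simprules)
    also have "\<dots> = a \<ominus> a \<ominus> a \<otimes> g \<oplus> a \<otimes> g \<ominus> g \<oplus> a \<otimes> g \<oplus> g \<ominus> a \<otimes> g"
      using aa aag ga gg gag by simp
    also have "\<dots> = \<zero>" using ac gc by (simp add: ring_simprules)
    finally have "\<one> \<ominus> a \<ominus> g \<oplus> a \<otimes> g = \<zero>" using unit_cancel[OF gu] ac gc by (meson m_closed ring_simprules)
    then have "\<one> \<ominus> a \<ominus> g = \<zero>" using ag0 ac gc by simp
    then have "(\<one> \<ominus> a \<ominus> g) \<oplus> g = g" using gc by simp
    moreover have "(\<one> \<ominus> a \<ominus> g) \<oplus> g = f" unfolding f_def using ac gc by (algebra; simp add: ring_simprules)
    ultimately show "g = f" by simp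
  qed
qed

lemma reduced_NCSUC: "ring R \<Longrightarrow> reduced_ring R \<Longrightarrow> NCSUC R"
  unfolding NCSUC_def nil_clean_elem_def reduced_ring_def
proof (intro ballI impI)
  fix a assume R: "ring R" and red: "nilpotents R \<subseteq> {\<zero>\<^bsub>R\<^esub>}" and a: "a \<in> carrier R"
    and "\<exists>e q. e \<in> idempotents R \<and> q \<in> nilpotents R \<and> a = e \<oplus>\<^bsub>R\<^esub> q"
  then obtain e q where e: "e \<in> idempotents R" "q \<in> nilpotents R" "a = e \<oplus>\<^bsub>R\<^esub> q" by blast
  have "q = \<zero>\<^bsub>R\<^esub>" using e red by auto
  then have "a = e" using e R by (simp add: idempotents_def ring.ring_simprules)
  then show "uniquely_strongly_clean R a" using ring.idem_usc[OF R] e by simp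
qed

lemma (in ring) left_ideal_carrier: "left_ideal I R \<Longrightarrow> I \<subseteq> carrier R"
  unfolding left_ideal_def using additive_subgroup.a_subset by blast

lemma (in ring) left_ideal_one: "left_ideal I R \<Longrightarrow> \<one> \<in> I \<Longrightarrow> I = carrier R"
proof
  assume I: "left_ideal I R" "\<one> \<in> I"
  show "I \<subseteq> carrier R" using left_ideal_carrier[OF I(1)] .
  show "carrier R \<subseteq> I"
  proof
    fix x assume x: "x \<in> carrier R"
    have "x \<otimes> \<one> \<in> I" using I x unfolding left_ideal_def by blast
    then show "x \<in> I" using x by simp
  qed
qed

lemma (in ring) exists_max:
  assumes J: "left_ideal J R" "\<one> \<notin> J"
  shows "\<exists>M. maximal_left_ideal M R \<and> J \<subseteq> M"
proof -
  define A where "A = {I. left_ideal I R \<and> J \<subseteq> I \<and> \<one> \<notin> I}"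
  have "\<exists>M\<in>A. \<forall>X\<in>A. M \<subseteq> X \<longrightarrow> X = M"
  proof (rule subset_Zorn_nonempty)
    show "A \<noteq> {}" using J unfolding A_def by auto
  next
    fix C assume C: "C \<noteq> {}" "subset.chain A C"
    have CA: "C \<subseteq> A" using C(2) unfolding pred_on.chain_def by auto
    have ch: "X \<subseteq> Y \<or> Y \<subseteq> X" if "X \<in> C" "Y \<in> C" for X Y
      using C(2) that unfolding pred_on.chain_def by auto
    have li: "left_ideal I R" if "I \<in> C" for I using CA that unfolding A_def by auto
    have sg: "additive_subgroup I R" if "I \<in> C" for I using li[OF that] unfolding left_ideal_def by auto
    have lm: "r \<otimes> x \<in> I" if "I \<in> C" "r \<in> carrier R" "x \<in> I" for I r x
      using li[OF that(1)] that(2,3) unfolding left_ideal_def by auto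
    have no1: "\<one> \<notin> I" if "I \<in> C" for I using CA that unfolding A_def by auto
    obtain I0 where I0: "I0 \<in> C" using C(1) by auto
    have JI0: "J \<subseteq> I0" using CA I0 unfolding A_def by auto
    have asg: "additive_subgroup (\<Union>C) R"
    proof (rule add_subgroupI')
      show "\<Union>C \<subseteq> carrier R"
      proof
        fix x assume "x \<in> \<Union>C"
        then obtain I where "I \<in> C" "x \<in> I" by auto
        then show "x \<in> carrier R" using left_ideal_carrier[OF li] by auto
      qed
      show "\<zero> \<in> \<Union>C" using I0 additive_subgroup.zero_closed[OF sg[OF I0]] by auto
      show "\<ominus> a \<in> \<Union>C" if ha: "a \<in> \<Union>C" for a
      proof -
        from ha obtain I where I: "I \<in> C" "a \<in> I" by (rule UnionE)
        then show ?thesis using additive_subgroup.a_inv_closed[OF sg[OF I(1)] I(2)] by auto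
      qed
      show "a \<oplus> b \<in> \<Union>C" if ha: "a \<in> \<Union>C" and hb: "b \<in> \<Union>C" for a b
      proof -
        from ha obtain X where X: "X \<in> C" "a \<in> X" by (rule UnionE)
        from hb obtain Y where Y: "Y \<in> C" "b \<in> Y" by (rule UnionE)
        show ?thesis
        proof (cases "X \<subseteq> Y")
          case True
          then have "a \<oplus> b \<in> Y" using additive_subgroup.a_closed[OF sg[OF Y(1)]] X Y by auto
          then show ?thesis using Y by auto
        next
          case False then have "Y \<subseteq> X" using ch X Y by auto
          then have "a \<oplus> b \<in> X" using additive_subgroup.a_closed[OF sg[OF X(1)]] X Y by auto
          then show ?thesis using X by auto
        qed
      qed
    qed
    have "r \<otimes> x \<in> \<Union>C" if hr: "r \<in> carrier R" and hx: "x \<in> \<Union>C" for r x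
    proof -
      from hx obtain I where "I \<in> C" "x \<in> I" by (rule UnionE)
      then show ?thesis using lm hr by auto
    qed
    then have "left_ideal (\<Union>C) R" using asg unfolding left_ideal_def by auto
    moreover have "J \<subseteq> \<Union>C" using JI0 I0 by auto
    moreover have "\<one> \<notin> \<Union>C" using no1 by auto
    ultimately show "\<Union>C \<in> A" unfolding A_def by auto
  qed
  then obtain M where M: "M \<in> A" "\<And>X. X \<in> A \<Longrightarrow> M \<subseteq> X \<Longrightarrow> X = M" by auto
  have Ml: "left_ideal M R" "J \<subseteq> M" "\<one> \<notin> M" using M(1) unfolding A_def by auto
  have "maximal_left_ideal M R"
    unfolding maximal_left_ideal_def
  proof (intro conjI allI impI)
    show "left_ideal M R" using Ml by auto
    show "M \<noteq> carrier R" using Ml by auto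
    fix X assume X: "left_ideal X R \<and> M \<subseteq> X"
    show "X = M \<or> X = carrier R"
    proof (cases "\<one> \<in> X")
      case True then show ?thesis using left_ideal_one X by auto
    next
      case False then have "X \<in> A" using X Ml unfolding A_def by auto
      then show ?thesis using M(2) X by auto
    qed
  qed
  then show ?thesis using Ml by auto
qed

lemma (in ring) principal_left_ideal:
  assumes x: "x \<in> carrier R" shows "left_ideal ((\<lambda>r. r \<otimes> x) ` carrier R) R"
  unfolding left_ideal_def
proof (intro conjI ballI)
  show "additive_subgroup ((\<lambda>r. r \<otimes> x) ` carrier R) R"
  proof (rule add_subgroupI')
    show "(\<lambda>r. r \<otimes> x) ` carrier R \<subseteq> carrier R" using x by auto
    show "\<zero> \<in> (\<lambda>r. r \<otimes> x) ` carrier R" using x by (intro image_eqI[of _ _ \<zero>]) auto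
    show "\<ominus> a \<in> (\<lambda>r. r \<otimes> x) ` carrier R" if ha: "a \<in> (\<lambda>r. r \<otimes> x) ` carrier R" for a
    proof -
      from ha obtain r where r: "r \<in> carrier R" "a = r \<otimes> x" by auto
      then have "\<ominus> a = (\<ominus> r) \<otimes> x" using x by (simp add: l_minus)
      moreover have "\<ominus> r \<in> carrier R" using r by simp
      ultimately show ?thesis by (rule image_eqI)
    qed
    show "a \<oplus> b \<in> (\<lambda>r. r \<otimes> x) ` carrier R" if ha: "a \<in> (\<lambda>r. r \<otimes> x) ` carrier R" and hb: "b \<in> (\<lambda>r. r \<otimes> x) ` carrier R" for a b
    proof -
      from ha obtain r where r: "r \<in> carrier R" "a = r \<otimes> x" by auto
      from hb obtain s where s: "s \<in> carrier R" "b = s \<otimes> x" by auto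
      have "a \<oplus> b = (r \<oplus> s) \<otimes> x" using x r s by (simp add: l_distr)
      moreover have "r \<oplus> s \<in> carrier R" using r s by simp
      ultimately show ?thesis by (rule image_eqI)
    qed
  qed
  fix r y assume r: "r \<in> carrier R" and y: "y \<in> (\<lambda>r. r \<otimes> x) ` carrier R"
  from y obtain s where s: "s \<in> carrier R" "y = s \<otimes> x" by auto
  have "r \<otimes> y = (r \<otimes> s) \<otimes> x" using r s x by (simp add: m_assoc)
  moreover have "r \<otimes> s \<in> carrier R" using r s by simp
  ultimately show "r \<otimes> y \<in> (\<lambda>r. r \<otimes> x) ` carrier R" by (rule image_eqI)
qed

lemma (in ring) local_nontrivial: "local_ring R \<Longrightarrow> \<one> \<noteq> \<zero>"
proof
  assume L: "local_ring R" and 10: "\<one> = \<zero>"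
  from L obtain M where M: "maximal_left_ideal M R" unfolding local_ring_def by auto
  have li: "left_ideal M R" and ne: "M \<noteq> carrier R" using M unfolding maximal_left_ideal_def by auto
  have "additive_subgroup M R" using li unfolding left_ideal_def by auto
  then have "\<zero> \<in> M" by (rule additive_subgroup.zero_closed)
  then have "\<one> \<in> M" using 10 by simp
  then show False using left_ideal_one[OF li] ne by simp
qed

lemma (in ring) idem_not_one:
  assumes e: "e \<in> carrier R" "e \<otimes> e = e" "e \<noteq> \<one>"
  shows "\<one> \<notin> (\<lambda>r. r \<otimes> e) ` carrier R"
proof
  assume "\<one> \<in> (\<lambda>r. r \<otimes> e) ` carrier R"
  then obtain r where r: "r \<in> carrier R" "r \<otimes> e = \<one>" by auto
  have "e = \<one> \<otimes> e" using e by simp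
  also have "\<dots> = (r \<otimes> e) \<otimes> e" using r by simp
  also have "\<dots> = r \<otimes> (e \<otimes> e)" by (rule m_assoc[OF r(1) e(1) e(1)])
  also have "\<dots> = \<one>" using r e by simp
  finally show False using e(3) by contradiction
qed

lemma (in ring) local_idem:
  assumes L: "local_ring R" and e: "e \<in> idempotents R" shows "e = \<zero> \<or> e = \<one>"
proof (rule ccontr)
  assume ne: "\<not> (e = \<zero> \<or> e = \<one>)"
  have ec: "e \<in> carrier R" and ee: "e \<otimes> e = e" using e by (auto simp: idempotents_def)
  define f where "f = \<one> \<ominus> e"
  have fc: "f \<in> carrier R" using ec by (simp add: f_def)
  have "f \<otimes> f = \<one> \<ominus> e \<ominus> e \<oplus> e \<otimes> e" unfolding f_def using ec by (algebra; simp add: ring_simprules)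
  also have "\<dots> = f" unfolding f_def using ec ee by (algebra; simp add: ring_simprules)
  finally have ff: "f \<otimes> f = f" .
  have f1: "f \<noteq> \<one>"
  proof
    assume "f = \<one>"
    then have "\<one> \<ominus> (\<one> \<ominus> e) = \<one> \<ominus> \<one>" unfolding f_def by simp
    moreover have "\<one> \<ominus> (\<one> \<ominus> e) = e" using ec by (algebra; simp add: ring_simprules)
    ultimately have "e = \<zero>" by (simp add: ring_simprules)
    then show False using ne by simp
  qed
  obtain M1 where M1: "maximal_left_ideal M1 R" "(\<lambda>r. r \<otimes> e) ` carrier R \<subseteq> M1"
    using exists_max[OF principal_left_ideal[OF ec] idem_not_one] ec ee ne by blast
  obtain M2 where M2: "maximal_left_ideal M2 R" "(\<lambda>r. r \<otimes> f) ` carrier R \<subseteq> M2"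
    using exists_max[OF principal_left_ideal[OF fc] idem_not_one] fc ff f1 by blast
  have ex1: "\<exists>!I. maximal_left_ideal I R" using L unfolding local_ring_def .
  have "M1 = M2" using ex1E[OF ex1] M1(1) M2(1) by metis
  have "e \<in> (\<lambda>r. r \<otimes> e) ` carrier R" using ec by (intro image_eqI[of _ _ \<one>]) auto
  then have "e \<in> M1" using M1(2) by (rule subsetD[rotated])
  have "f \<in> (\<lambda>r. r \<otimes> f) ` carrier R" using fc by (intro image_eqI[of _ _ \<one>]) auto
  then have "f \<in> M2" using M2(2) by (rule subsetD[rotated])
  then have fM: "f \<in> M1" using \<open>M1 = M2\<close> by simp
  have sg: "additive_subgroup M1 R" using M1(1) unfolding maximal_left_ideal_def left_ideal_def by auto
  have "e \<oplus> f \<in> M1" by (rule additive_subgroup.a_closed[OF sg \<open>e \<in> M1\<close> fM])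
  moreover have "e \<oplus> f = \<one>" unfolding f_def using ec by (algebra; simp add: ring_simprules)
  ultimately have "\<one> \<in> M1" by simp
  moreover have "left_ideal M1 R" "M1 \<noteq> carrier R" using M1(1) unfolding maximal_left_ideal_def by auto
  ultimately show False using left_ideal_one by auto
qed

lemma (in ring) one_minus_nil_unit:
  assumes xc: "x \<in> carrier R" and xn: "x [^] (n::nat) = \<zero>" shows "\<one> \<ominus> x \<in> Units R"
proof -
  define g where "g = rec_nat \<zero> (\<lambda>_ y. \<one> \<oplus> x \<otimes> y)"
  have gS: "g (Suc k) = \<one> \<oplus> x \<otimes> g k" for k by (simp add: g_def)
  have g0: "g 0 = \<zero>" by (simp add: g_def)
  have P: "g k \<in> carrier R \<and> (\<one> \<ominus> x) \<otimes> g k = \<one> \<ominus> x [^] k \<and> g k \<otimes> (\<one> \<ominus> x) = \<one> \<ominus> x [^] k" for k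
  proof (induction k)
    case 0 show ?case using xc by (simp add: g0 ring_simprules)
  next
    case (Suc k)
    define p where "p = x [^] k"
    have pc: "p \<in> carrier R" using xc by (simp add: p_def)
    have gc: "g k \<in> carrier R" and IH1: "(\<one> \<ominus> x) \<otimes> g k = \<one> \<ominus> p" and IH2: "g k \<otimes> (\<one> \<ominus> x) = \<one> \<ominus> p"
      using Suc.IH by (auto simp: p_def)
    have xp: "x [^] Suc k = x \<otimes> p" unfolding p_def by (rule nat_pow_Suc2[OF xc])
    have "(\<one> \<ominus> x) \<otimes> g (Suc k) = (\<one> \<ominus> x) \<oplus> x \<otimes> ((\<one> \<ominus> x) \<otimes> g k)"
      unfolding gS using xc gc by (algebra; simp add: ring_simprules)
    also have "\<dots> = (\<one> \<ominus> x) \<oplus> x \<otimes> (\<one> \<ominus> p)" using IH1 by simp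
    also have "\<dots> = \<one> \<ominus> x \<otimes> p" using xc pc by (algebra; simp add: ring_simprules)
    finally have L: "(\<one> \<ominus> x) \<otimes> g (Suc k) = \<one> \<ominus> x [^] Suc k" using xp by simp
    have "g (Suc k) \<otimes> (\<one> \<ominus> x) = (\<one> \<ominus> x) \<oplus> x \<otimes> (g k \<otimes> (\<one> \<ominus> x))"
      unfolding gS using xc gc by (algebra; simp add: ring_simprules)
    also have "\<dots> = (\<one> \<ominus> x) \<oplus> x \<otimes> (\<one> \<ominus> p)" using IH2 by simp
    also have "\<dots> = \<one> \<ominus> x \<otimes> p" using xc pc by (algebra; simp add: ring_simprules)
    finally have R: "g (Suc k) \<otimes> (\<one> \<ominus> x) = \<one> \<ominus> x [^] Suc k" using xp by simp
    have "g (Suc k) \<in> carrier R" unfolding gS using xc gc by simp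
    then show ?case using L R by simp
  qed
  have "\<one> \<ominus> x [^] n = \<one>" using xn by (simp add: ring_simprules)
  then show ?thesis using P[of n] xc unfolding Units_def by auto
qed

lemma (in ring) neg_pow: "x \<in> carrier R \<Longrightarrow> (\<ominus> x) [^] (n::nat) = x [^] n \<or> (\<ominus> x) [^] n = \<ominus> (x [^] n)"
proof (induction n)
  case 0 then show ?case by simp
next
  case (Suc n)
  from Suc.IH[OF Suc.prems] show ?case
  proof
    assume "(\<ominus> x) [^] n = x [^] n"
    then have "(\<ominus> x) [^] Suc n = \<ominus> (x [^] Suc n)" using Suc.prems by (simp add: r_minus)
    then show ?thesis by simp
  next
    assume "(\<ominus> x) [^] n = \<ominus> (x [^] n)"
    then have "(\<ominus> x) [^] Suc n = x [^] Suc n" using Suc.prems by (simp add: r_minus l_minus)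
    then show ?thesis by simp
  qed
qed

lemma (in ring) nil_neg: "q \<in> nilpotents R \<Longrightarrow> \<ominus> q \<in> nilpotents R"
proof -
  assume "q \<in> nilpotents R"
  then obtain n where q: "q \<in> carrier R" "q [^] (n::nat) = \<zero>" unfolding nilpotents_def by auto
  have "(\<ominus> q) [^] n = \<zero>" using neg_pow[OF q(1), of n] q(2) by auto
  then show ?thesis using q unfolding nilpotents_def by auto
qed

lemma (in ring) units_neg: assumes "u \<in> Units R" shows "\<ominus> u \<in> Units R"
proof -
  obtain v where v: "v \<in> carrier R" "v \<otimes> u = \<one>" "u \<otimes> v = \<one>" and u: "u \<in> carrier R"
    using assms unfolding Units_def by auto
  have "(\<ominus> v) \<otimes> (\<ominus> u) = \<one>" "(\<ominus> u) \<otimes> (\<ominus> v) = \<one>" using u v by (simp_all add: l_minus r_minus)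
  then show ?thesis using u v unfolding Units_def by auto
qed

lemma (in ring) units_pow: "u \<in> Units R \<Longrightarrow> u [^] (n::nat) \<in> Units R"
  by (induction n) (auto intro: Units_m_closed)

lemma (in ring) nil_not_unit:
  assumes nz: "\<one> \<noteq> \<zero>" and q: "q \<in> nilpotents R" shows "q \<notin> Units R"
proof
  assume u: "q \<in> Units R"
  obtain n where "q [^] (n::nat) = \<zero>" using q unfolding nilpotents_def by auto
  then have "\<zero> \<in> Units R" using units_pow[OF u, of n] by simp
  then obtain v where "v \<in> carrier R" "v \<otimes> \<zero> = \<one>" unfolding Units_def by auto
  then show False using nz by simp
qed

lemma (in ring) local_NCSUC: assumes L: "local_ring R" shows "NCSUC R"
  unfolding NCSUC_def
proof (intro ballI impI)
  fix a assume ac: "a \<in> carrier R" and "nil_clean_elem R a"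
  then obtain e q where e: "e \<in> idempotents R" and q: "q \<in> nilpotents R" and a: "a = e \<oplus> q"
    unfolding nil_clean_elem_def by auto
  have nz: "\<one> \<noteq> \<zero>" using local_nontrivial[OF L] .
  have qc: "q \<in> carrier R" using q unfolding nilpotents_def by auto
  obtain n where qn: "q [^] (n::nat) = \<zero>" using q unfolding nilpotents_def by auto
  have idem: "\<And>g. g \<in> idempotents R \<Longrightarrow> g = \<zero> \<or> g = \<one>" using local_idem[OF L] by auto
  have i1: "\<one> \<in> idempotents R" and i0: "\<zero> \<in> idempotents R" by (auto simp: idempotents_def)
  have u1: "\<one> \<ominus> q \<in> Units R" by (rule one_minus_nil_unit[OF qc qn])
  have nq: "q \<notin> Units R" by (rule nil_not_unit[OF nz q])
  have "e = \<zero> \<or> e = \<one>" using idem[OF e] .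
  then show "uniquely_strongly_clean R a" unfolding uniquely_strongly_clean_def
  proof
    assume "e = \<zero>"
    then have aq: "a = q" using a qc by simp
    have "q \<ominus> \<one> = \<ominus> (\<one> \<ominus> q)" using qc by (algebra; simp add: ring_simprules)
    then have uq: "q \<ominus> \<one> \<in> Units R" using units_neg[OF u1] by simp
    show "\<exists>!f. f \<in> idempotents R \<and> a \<ominus> f \<in> Units R \<and> a \<otimes> f = f \<otimes> a"
    proof (rule ex1I[of _ \<one>])
      show "\<one> \<in> idempotents R \<and> a \<ominus> \<one> \<in> Units R \<and> a \<otimes> \<one> = \<one> \<otimes> a" using i1 uq aq qc by simp
    next
      fix g assume g: "g \<in> idempotents R \<and> a \<ominus> g \<in> Units R \<and> a \<otimes> g = g \<otimes> a"
      have "g \<noteq> \<zero>"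
      proof
        assume "g = \<zero>" then have "q \<in> Units R" using g aq qc by (simp add: ring_simprules)
        then show False using nq by simp
      qed
      then show "g = \<one>" using idem g by auto
    qed
  next
    assume "e = \<one>"
    then have aq: "a = \<one> \<oplus> q" using a by simp
    obtain m where qm: "(\<ominus> q) [^] (m::nat) = \<zero>" using nil_neg[OF q] unfolding nilpotents_def by auto
    have "\<one> \<ominus> (\<ominus> q) = \<one> \<oplus> q" using qc by (simp add: ring_simprules)
    then have ua: "a \<in> Units R" using one_minus_nil_unit[OF _ qm] qc aq by simp
    show "\<exists>!f. f \<in> idempotents R \<and> a \<ominus> f \<in> Units R \<and> a \<otimes> f = f \<otimes> a"
    proof (rule ex1I[of _ \<zero>])
      show "\<zero> \<in> idempotents R \<and> a \<ominus> \<zero> \<in> Units R \<and> a \<otimes> \<zero> = \<zero> \<otimes> a" using i0 ua ac by (simp add: ring_simprules)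
    next
      fix g assume g: "g \<in> idempotents R \<and> a \<ominus> g \<in> Units R \<and> a \<otimes> g = g \<otimes> a"
      have "g \<noteq> \<one>"
      proof
        assume "g = \<one>"
        moreover have "(\<one> \<oplus> q) \<ominus> \<one> = q" using qc by (algebra; simp add: ring_simprules)
        ultimately have "q \<in> Units R" using g aq by simp
        then show False using nq by simp
      qed
      then show "g = \<zero>" using idem g by auto
    qed
  qed
qed

lemma T2_carrier: "carrier (T2 R) = carrier R \<times> carrier R \<times> {\<zero>\<^bsub>R\<^esub>} \<times> carrier R"
  by (simp add: T2_def)
lemma T2_mult_raw: "mult (T2 R) = mult (M2 R)" by (simp add: T2_def)
lemma T2_one: "\<one>\<^bsub>T2 R\<^esub> = (\<one>\<^bsub>R\<^esub>, \<zero>\<^bsub>R\<^esub>, \<zero>\<^bsub>R\<^esub>, \<one>\<^bsub>R\<^esub>)" by (simp add: T2_def M2_def)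
lemma T2_zero: "\<zero>\<^bsub>T2 R\<^esub> = (\<zero>\<^bsub>R\<^esub>, \<zero>\<^bsub>R\<^esub>, \<zero>\<^bsub>R\<^esub>, \<zero>\<^bsub>R\<^esub>)" by (simp add: T2_def M2_def)
lemma T2_add: "(a, b, c, d) \<oplus>\<^bsub>T2 R\<^esub> (a', b', c', d') = (a \<oplus>\<^bsub>R\<^esub> a', b \<oplus>\<^bsub>R\<^esub> b', c \<oplus>\<^bsub>R\<^esub> c', d \<oplus>\<^bsub>R\<^esub> d')"
  by (simp add: T2_def M2_def)
lemma M2_mult: "(a, b, c, d) \<otimes>\<^bsub>M2 R\<^esub> (a', b', c', d') =
       (a \<otimes>\<^bsub>R\<^esub> a' \<oplus>\<^bsub>R\<^esub> b \<otimes>\<^bsub>R\<^esub> c', a \<otimes>\<^bsub>R\<^esub> b' \<oplus>\<^bsub>R\<^esub> b \<otimes>\<^bsub>R\<^esub> d',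
        c \<otimes>\<^bsub>R\<^esub> a' \<oplus>\<^bsub>R\<^esub> d \<otimes>\<^bsub>R\<^esub> c', c \<otimes>\<^bsub>R\<^esub> b' \<oplus>\<^bsub>R\<^esub> d \<otimes>\<^bsub>R\<^esub> d')"
  by (simp add: M2_def)
lemma M2_carrier: "carrier (M2 R) = carrier R \<times> carrier R \<times> carrier R \<times> carrier R"
  by (simp add: M2_def)
lemma M2_one: "\<one>\<^bsub>M2 R\<^esub> = (\<one>\<^bsub>R\<^esub>, \<zero>\<^bsub>R\<^esub>, \<zero>\<^bsub>R\<^esub>, \<one>\<^bsub>R\<^esub>)" by (simp add: M2_def)
lemma M2_zero: "\<zero>\<^bsub>M2 R\<^esub> = (\<zero>\<^bsub>R\<^esub>, \<zero>\<^bsub>R\<^esub>, \<zero>\<^bsub>R\<^esub>, \<zero>\<^bsub>R\<^esub>)" by (simp add: M2_def)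
lemma M2_add: "(a, b, c, d) \<oplus>\<^bsub>M2 R\<^esub> (a', b', c', d') = (a \<oplus>\<^bsub>R\<^esub> a', b \<oplus>\<^bsub>R\<^esub> b', c \<oplus>\<^bsub>R\<^esub> c', d \<oplus>\<^bsub>R\<^esub> d')"
  by (simp add: M2_def)

lemma (in ring) T2_mult:
  assumes "a \<in> carrier R" "b \<in> carrier R" "d \<in> carrier R" "a' \<in> carrier R" "b' \<in> carrier R" "d' \<in> carrier R"
  shows "(a, b, \<zero>, d) \<otimes>\<^bsub>T2 R\<^esub> (a', b', \<zero>, d') = (a \<otimes> a', a \<otimes> b' \<oplus> b \<otimes> d', \<zero>, d \<otimes> d')"
  using assms by (simp add: T2_mult_raw M2_mult)

lemma a_inv_eqI:
  assumes "w \<in> carrier S" "x \<oplus>\<^bsub>S\<^esub> w = \<zero>\<^bsub>S\<^esub>" "w \<oplus>\<^bsub>S\<^esub> x = \<zero>\<^bsub>S\<^esub>"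
    "\<And>y. y \<in> carrier S \<Longrightarrow> x \<oplus>\<^bsub>S\<^esub> y = \<zero>\<^bsub>S\<^esub> \<Longrightarrow> y = w"
  shows "\<ominus>\<^bsub>S\<^esub> x = w"
  unfolding a_inv_def m_inv_def
proof (rule the_equality)
  show "w \<in> carrier (add_monoid S) \<and> x \<otimes>\<^bsub>add_monoid S\<^esub> w = \<one>\<^bsub>add_monoid S\<^esub> \<and> w \<otimes>\<^bsub>add_monoid S\<^esub> x = \<one>\<^bsub>add_monoid S\<^esub>"
    using assms(1-3) by simp
  fix y assume "y \<in> carrier (add_monoid S) \<and> x \<otimes>\<^bsub>add_monoid S\<^esub> y = \<one>\<^bsub>add_monoid S\<^esub> \<and> y \<otimes>\<^bsub>add_monoid S\<^esub> x = \<one>\<^bsub>add_monoid S\<^esub>"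
  then have "y \<in> carrier S" "x \<oplus>\<^bsub>S\<^esub> y = \<zero>\<^bsub>S\<^esub>" by simp_all
  then show "y = w" by (rule assms(4))
qed

lemma (in ring) T2_neg:
  assumes ac: "a \<in> carrier R" "b \<in> carrier R" "d \<in> carrier R"
  shows "\<ominus>\<^bsub>T2 R\<^esub> (a, b, \<zero>, d) = (\<ominus> a, \<ominus> b, \<zero>, \<ominus> d)"
proof (rule a_inv_eqI)
  show "(\<ominus> a, \<ominus> b, \<zero>, \<ominus> d) \<in> carrier (T2 R)" using ac by (simp add: T2_carrier)
  show "(a, b, \<zero>, d) \<oplus>\<^bsub>T2 R\<^esub> (\<ominus> a, \<ominus> b, \<zero>, \<ominus> d) = \<zero>\<^bsub>T2 R\<^esub>"
    using ac by (simp add: T2_add T2_zero r_neg)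
  show "(\<ominus> a, \<ominus> b, \<zero>, \<ominus> d) \<oplus>\<^bsub>T2 R\<^esub> (a, b, \<zero>, d) = \<zero>\<^bsub>T2 R\<^esub>"
    using ac by (simp add: T2_add T2_zero l_neg)
  fix y assume y: "y \<in> carrier (T2 R)" "(a, b, \<zero>, d) \<oplus>\<^bsub>T2 R\<^esub> y = \<zero>\<^bsub>T2 R\<^esub>"
  then obtain y1 y2 y4 where yy: "y = (y1, y2, \<zero>, y4)" "y1 \<in> carrier R" "y2 \<in> carrier R" "y4 \<in> carrier R"
    by (auto simp: T2_carrier)
  have "a \<oplus> y1 = \<zero>" "b \<oplus> y2 = \<zero>" "d \<oplus> y4 = \<zero>" using y yy by (auto simp: T2_add T2_zero)
  then have "y1 \<oplus> a = \<zero>" "y2 \<oplus> b = \<zero>" "y4 \<oplus> d = \<zero>" using ac yy by (simp_all add: a_comm)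
  then have "\<ominus> a = y1" "\<ominus> b = y2" "\<ominus> d = y4" using ac yy by (simp_all add: minus_equality)
  then have "y1 = \<ominus> a" "y2 = \<ominus> b" "y4 = \<ominus> d" by simp_all
  then show "y = (\<ominus> a, \<ominus> b, \<zero>, \<ominus> d)" using yy by simp
qed

lemma (in ring) T2_minus:
  assumes "a \<in> carrier R" "b \<in> carrier R" "d \<in> carrier R" "a' \<in> carrier R" "b' \<in> carrier R" "d' \<in> carrier R"
  shows "(a, b, \<zero>, d) \<ominus>\<^bsub>T2 R\<^esub> (a', b', \<zero>, d') = (a \<ominus> a', b \<ominus> b', \<zero>, d \<ominus> d')"
  using assms by (simp add: a_minus_def T2_neg T2_add)

lemma (in ring) T2_units:
  assumes "u \<in> Units R" "v \<in> Units R" "t \<in> carrier R"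
  shows "(u, t, \<zero>, v) \<in> Units (T2 R)"
proof -
  obtain u' where u': "u' \<in> carrier R" "u' \<otimes> u = \<one>" "u \<otimes> u' = \<one>" and uc: "u \<in> carrier R"
    using assms(1) unfolding Units_def by auto
  obtain v' where v': "v' \<in> carrier R" "v' \<otimes> v = \<one>" "v \<otimes> v' = \<one>" and vc: "v \<in> carrier R"
    using assms(2) unfolding Units_def by auto
  define w where "w = \<ominus> (u' \<otimes> t \<otimes> v')"
  have wc: "w \<in> carrier R" using u' v' assms(3) by (simp add: w_def)
  have h1: "u \<otimes> (u' \<otimes> t \<otimes> v') = t \<otimes> v'" using u' v' uc vc assms(3) by (simp add: m_assoc[symmetric])
  have "u \<otimes> w = \<ominus> (t \<otimes> v')" unfolding w_def using u' v' uc vc assms(3) h1 by (simp add: r_minus)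
  then have e1: "u \<otimes> w \<oplus> t \<otimes> v' = \<zero>" using v' assms(3) by (simp add: l_neg r_neg)
  have h2: "(u' \<otimes> t \<otimes> v') \<otimes> v = u' \<otimes> t" using u' v' uc vc assms(3) by (simp add: m_assoc)
  have "w \<otimes> v = \<ominus> (u' \<otimes> t)" unfolding w_def using u' v' uc vc assms(3) h2 by (simp add: l_minus)
  then have e2: "u' \<otimes> t \<oplus> w \<otimes> v = \<zero>" using u' assms(3) by (simp add: r_neg)
  have "(u', w, \<zero>, v') \<otimes>\<^bsub>T2 R\<^esub> (u, t, \<zero>, v) = \<one>\<^bsub>T2 R\<^esub>"
    using u' v' uc vc wc assms(3) e2 by (simp add: T2_mult T2_one)
  moreover have "(u, t, \<zero>, v) \<otimes>\<^bsub>T2 R\<^esub> (u', w, \<zero>, v') = \<one>\<^bsub>T2 R\<^esub>"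
    using u' v' uc vc wc assms(3) e1 by (simp add: T2_mult T2_one)
  moreover have "(u', w, \<zero>, v') \<in> carrier (T2 R)" "(u, t, \<zero>, v) \<in> carrier (T2 R)"
    using u' v' uc vc wc assms(3) by (auto simp: T2_carrier)
  ultimately show ?thesis unfolding Units_def by blast
qed

lemma (in ring) T2_units_D:
  assumes "(a, b, c, d) \<in> Units (T2 R)" shows "a \<in> Units R" "d \<in> Units R"
proof -
  obtain X where X: "X \<in> carrier (T2 R)" "X \<otimes>\<^bsub>T2 R\<^esub> (a, b, c, d) = \<one>\<^bsub>T2 R\<^esub>"
    "(a, b, c, d) \<otimes>\<^bsub>T2 R\<^esub> X = \<one>\<^bsub>T2 R\<^esub>" and A: "(a, b, c, d) \<in> carrier (T2 R)"
    using assms unfolding Units_def by auto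
  obtain x1 x2 x4 where xx: "X = (x1, x2, \<zero>, x4)" "x1 \<in> carrier R" "x2 \<in> carrier R" "x4 \<in> carrier R"
    using X(1) by (auto simp: T2_carrier)
  have ac: "a \<in> carrier R" "b \<in> carrier R" "c = \<zero>" "d \<in> carrier R" using A by (auto simp: T2_carrier)
  have "x1 \<otimes> a = \<one>" "a \<otimes> x1 = \<one>" "x4 \<otimes> d = \<one>" "d \<otimes> x4 = \<one>"
    using X(2,3) xx ac by (simp_all add: T2_mult T2_one)
  then show "a \<in> Units R" "d \<in> Units R" using xx ac unfolding Units_def by auto
qed

lemma (in ring) T2_idem:
  "(p, s, c, r) \<in> idempotents (T2 R) \<longleftrightarrow>
     p \<in> carrier R \<and> s \<in> carrier R \<and> c = \<zero> \<and> r \<in> carrier R \<and> p \<otimes> p = p \<and> p \<otimes> s \<oplus> s \<otimes> r = s \<and> r \<otimes> r = r"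
  by (auto simp: idempotents_def T2_carrier T2_mult)

lemma (in ring) T2_pow:
  assumes "a \<in> carrier R" "b \<in> carrier R" "d \<in> carrier R"
  shows "\<exists>y. y \<in> carrier R \<and> (a, b, \<zero>, d) [^]\<^bsub>T2 R\<^esub> (n::nat) = (a [^] n, y, \<zero>, d [^] n)"
proof (induction n)
  case 0 show ?case by (auto simp: T2_one)
next
  case (Suc n)
  then obtain y where y: "y \<in> carrier R" "(a, b, \<zero>, d) [^]\<^bsub>T2 R\<^esub> n = (a [^] n, y, \<zero>, d [^] n)" by auto
  have "(a, b, \<zero>, d) [^]\<^bsub>T2 R\<^esub> Suc n = (a [^] n, y, \<zero>, d [^] n) \<otimes>\<^bsub>T2 R\<^esub> (a, b, \<zero>, d)"
    using y by (simp add: Group.nat_pow_Suc)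
  also have "\<dots> = (a [^] n \<otimes> a, a [^] n \<otimes> b \<oplus> y \<otimes> d, \<zero>, d [^] n \<otimes> d)"
    using y assms by (simp add: T2_mult)
  finally show ?case using y assms by auto
qed

lemma (in ring) dom_idem:
  assumes D: "nc_domain R" and e: "e \<in> carrier R" "e \<otimes> e = e" shows "e = \<zero> \<or> e = \<one>"
proof -
  have "e \<otimes> (e \<ominus> \<one>) = e \<otimes> e \<ominus> e" using e by (algebra; simp add: ring_simprules)
  also have "\<dots> = \<zero>" using e by (simp add: ring_simprules)
  finally have "e = \<zero> \<or> e \<ominus> \<one> = \<zero>" using D e unfolding nc_domain_def by auto
  moreover have "e = (e \<ominus> \<one>) \<oplus> \<one>" using e by (algebra; simp add: ring_simprules)
  ultimately show ?thesis by auto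
qed

lemma (in ring) dom_nil:
  assumes D: "nc_domain R" and x: "x \<in> carrier R" shows "x [^] (n::nat) = \<zero> \<Longrightarrow> x = \<zero>"
proof (induction n)
  case 0 then show ?case using D unfolding nc_domain_def by simp
next
  case (Suc n)
  then have "x [^] n \<otimes> x = \<zero>" by simp
  then have "x [^] n = \<zero> \<or> x = \<zero>" using D x unfolding nc_domain_def by simp
  then show ?case using Suc.IH by auto
qed

lemma (in ring) diag_unit:
  assumes "x = \<zero> \<or> x = \<one>" shows "x \<ominus> (if x = \<zero> then \<one> else \<zero>) \<in> Units R"
proof (cases "x = \<zero>")
  case True
  then have "x \<ominus> (if x = \<zero> then \<one> else \<zero>) = \<ominus> \<one>" by (simp add: ring_simprules)
  then show ?thesis using units_neg[OF Units_one_closed] by simp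
next
  case False
  then have "x = \<one>" using assms by simp
  then have "x \<ominus> (if x = \<zero> then \<one> else \<zero>) = \<one>" using False by (simp add: ring_simprules)
  then show ?thesis by simp
qed

lemma (in ring) diag_det:
  assumes nz: "\<one> \<noteq> \<zero>" and x: "x = \<zero> \<or> x = \<one>" and p: "p = \<zero> \<or> p = \<one>" and u: "x \<ominus> p \<in> Units R"
  shows "p = (if x = \<zero> then \<one> else \<zero>)"
proof -
  have "x \<noteq> p"
  proof
    assume "x = p"
    then have "\<zero> \<in> Units R" using u x by (auto simp: ring_simprules)
    then obtain v where "v \<in> carrier R" "v \<otimes> \<zero> = \<one>" unfolding Units_def by auto
    then show False using nz by simp
  qed
  then show ?thesis using x p nz by auto
qed

lemma (in ring) self_add: "s \<in> carrier R \<Longrightarrow> s \<oplus> s = s \<Longrightarrow> s = \<zero>"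
  using add.l_cancel_one[of s s] by simp

lemma (in ring) T2_usc:
  assumes D: "nc_domain R" and x: "x = \<zero> \<or> x = \<one>" and z: "z = \<zero> \<or> z = \<one>" and y: "y \<in> carrier R"
  shows "uniquely_strongly_clean (T2 R) (x, y, \<zero>, z)"
  unfolding uniquely_strongly_clean_def
proof -
  have nz: "\<one> \<noteq> \<zero>" using D unfolding nc_domain_def by simp
  have xc: "x \<in> carrier R" and zc: "z \<in> carrier R" using x z by auto
  define p0 where "p0 = (if x = \<zero> then \<one> else \<zero>)"
  define r0 where "r0 = (if z = \<zero> then \<one> else \<zero>)"
  define s0 where "s0 = (if x = z then \<zero> else \<ominus> y)"
  have p0c: "p0 \<in> carrier R" and r0c: "r0 \<in> carrier R" and s0c: "s0 \<in> carrier R"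
    using y by (auto simp: p0_def r0_def s0_def)
  let ?A = "(x, y, \<zero>, z)"
  let ?W = "(p0, s0, \<zero>, r0)"
  show "\<exists>!f. f \<in> idempotents (T2 R) \<and> ?A \<ominus>\<^bsub>T2 R\<^esub> f \<in> Units (T2 R) \<and> ?A \<otimes>\<^bsub>T2 R\<^esub> f = f \<otimes>\<^bsub>T2 R\<^esub> ?A"
  proof (rule ex1I[of _ ?W])
    have "?A \<ominus>\<^bsub>T2 R\<^esub> ?W = (x \<ominus> p0, y \<ominus> s0, \<zero>, z \<ominus> r0)"
      using xc zc y p0c r0c s0c by (simp add: T2_minus)
    moreover have "(x \<ominus> p0, y \<ominus> s0, \<zero>, z \<ominus> r0) \<in> Units (T2 R)"
      using T2_units[OF diag_unit[OF x] diag_unit[OF z]] y s0c unfolding p0_def r0_def by simp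
    ultimately have U: "?A \<ominus>\<^bsub>T2 R\<^esub> ?W \<in> Units (T2 R)" by simp
    have idW: "?W \<in> idempotents (T2 R) \<longleftrightarrow> p0 \<otimes> p0 = p0 \<and> p0 \<otimes> s0 \<oplus> s0 \<otimes> r0 = s0 \<and> r0 \<otimes> r0 = r0"
      using p0c r0c s0c by (simp add: T2_idem)
    have cmW: "?A \<otimes>\<^bsub>T2 R\<^esub> ?W = ?W \<otimes>\<^bsub>T2 R\<^esub> ?A \<longleftrightarrow>
       x \<otimes> p0 = p0 \<otimes> x \<and> x \<otimes> s0 \<oplus> y \<otimes> r0 = p0 \<otimes> y \<oplus> s0 \<otimes> z \<and> z \<otimes> r0 = r0 \<otimes> z"
      using p0c r0c s0c xc zc y by (simp add: T2_mult)
    have sc: "p0 \<otimes> p0 = p0 \<and> p0 \<otimes> s0 \<oplus> s0 \<otimes> r0 = s0 \<and> r0 \<otimes> r0 = r0 \<and>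
       x \<otimes> p0 = p0 \<otimes> x \<and> x \<otimes> s0 \<oplus> y \<otimes> r0 = p0 \<otimes> y \<oplus> s0 \<otimes> z \<and> z \<otimes> r0 = r0 \<otimes> z"
    proof (cases "x = \<zero>")
      case x0: True
      show ?thesis
      proof (cases "z = \<zero>")
        case True
        then have "p0 = \<one>" "r0 = \<one>" "s0 = \<zero>" using x0 by (simp_all add: p0_def r0_def s0_def)
        then show ?thesis using x0 True y by simp
      next
        case False
        then have z1: "z = \<one>" using z by simp
        then have "p0 = \<one>" "r0 = \<zero>" "s0 = \<ominus> y" using x0 False by (simp_all add: p0_def r0_def s0_def)
        then show ?thesis using x0 z1 y by (simp add: l_neg r_neg)
      qed
    next
      case xn0: False
      then have x1: "x = \<one>" using x by simp
      show ?thesis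
      proof (cases "z = \<zero>")
        case True
        then have "p0 = \<zero>" "r0 = \<one>" "s0 = \<ominus> y" using xn0 True by (simp_all add: p0_def r0_def s0_def)
        then show ?thesis using x1 True y by (simp add: l_neg r_neg)
      next
        case False
        then have z1: "z = \<one>" using z by simp
        then have "p0 = \<zero>" "r0 = \<zero>" "s0 = \<zero>" using x1 xn0 False by (simp_all add: p0_def r0_def s0_def)
        then show ?thesis using x1 z1 y by simp
      qed
    qed
    show "?W \<in> idempotents (T2 R) \<and> ?A \<ominus>\<^bsub>T2 R\<^esub> ?W \<in> Units (T2 R) \<and> ?A \<otimes>\<^bsub>T2 R\<^esub> ?W = ?W \<otimes>\<^bsub>T2 R\<^esub> ?A"
      using U idW cmW sc by blast
  next
    fix F assume F: "F \<in> idempotents (T2 R) \<and> ?A \<ominus>\<^bsub>T2 R\<^esub> F \<in> Units (T2 R) \<and> ?A \<otimes>\<^bsub>T2 R\<^esub> F = F \<otimes>\<^bsub>T2 R\<^esub> ?A"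
    obtain p s c r where Fe: "F = (p, s, c, r)" by (cases F) auto
    have Fi: "p \<in> carrier R" "s \<in> carrier R" "c = \<zero>" "r \<in> carrier R" "p \<otimes> p = p"
      "p \<otimes> s \<oplus> s \<otimes> r = s" "r \<otimes> r = r" using F unfolding Fe T2_idem by auto
    have pp: "p = \<zero> \<or> p = \<one>" using dom_idem[OF D Fi(1) Fi(5)] .
    have rr: "r = \<zero> \<or> r = \<one>" using dom_idem[OF D Fi(4) Fi(7)] .
    have "?A \<ominus>\<^bsub>T2 R\<^esub> F = (x \<ominus> p, y \<ominus> s, \<zero>, z \<ominus> r)"
      using xc zc y Fi unfolding Fe by (simp add: T2_minus)
    then have "(x \<ominus> p, y \<ominus> s, \<zero>, z \<ominus> r) \<in> Units (T2 R)" using F by simp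
    then have "x \<ominus> p \<in> Units R" "z \<ominus> r \<in> Units R" using T2_units_D by blast+
    then have pe: "p = p0" and re: "r = r0" unfolding p0_def r0_def
      using diag_det[OF nz x pp] diag_det[OF nz z rr] by auto
    have comm: "(x \<otimes> p, x \<otimes> s \<oplus> y \<otimes> r, \<zero>, z \<otimes> r) = (p \<otimes> x, p \<otimes> y \<oplus> s \<otimes> z, \<zero>, r \<otimes> z)"
      using F xc zc y Fi unfolding Fe by (simp add: T2_mult)
    then have comm2: "x \<otimes> s \<oplus> y \<otimes> r = p \<otimes> y \<oplus> s \<otimes> z" by simp
    have "s = s0"
    proof (cases "x = \<zero>")
      case x0: True
      show ?thesis
      proof (cases "z = \<zero>")
        case True
        then have "p = \<one>" "r = \<one>" using x0 pe re p0_def r0_def by auto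
        then have "s \<oplus> s = s" using Fi by simp
        then have "s = \<zero>" by (rule self_add[OF Fi(2)])
        then show ?thesis using x0 True s0_def by simp
      next
        case False
        then have z1: "z = \<one>" using z by simp
        then have "p = \<one>" "r = \<zero>" using x0 pe re p0_def r0_def False by auto
        then have "\<zero> = y \<oplus> s" using comm2 x0 z1 Fi y by simp
        then have "s \<oplus> y = \<zero>" using Fi y by (simp add: a_comm)
        then have "\<ominus> y = s" using Fi y by (simp add: minus_equality)
        then show ?thesis using x0 False s0_def by simp
      qed
    next
      case xn0: False
      then have x1: "x = \<one>" using x by simp
      show ?thesis
      proof (cases "z = \<zero>")
        case True
        then have "p = \<zero>" "r = \<one>" using xn0 pe re p0_def r0_def by auto
        then have "s \<oplus> y = \<zero>" using comm2 x1 True Fi y by simp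
        then have "\<ominus> y = s" using Fi y by (simp add: minus_equality)
        then show ?thesis using x1 True nz s0_def by simp
      next
        case False
        then have z1: "z = \<one>" using z by simp
        then have "p = \<zero>" "r = \<zero>" using xn0 pe re p0_def r0_def False by auto
        then have "\<zero> = s" using Fi by simp
        then show ?thesis using x1 z1 s0_def by simp
      qed
    qed
    then show "F = ?W" using Fe Fi pe re by simp
  qed
qed

lemma (in ring) T2_NCSUC: assumes D: "nc_domain R" shows "NCSUC (T2 R)"
  unfolding NCSUC_def
proof (intro ballI impI)
  fix A assume A: "A \<in> carrier (T2 R)" "nil_clean_elem (T2 R) A"
  then obtain E Q where E: "E \<in> idempotents (T2 R)" and Q: "Q \<in> nilpotents (T2 R)" and AEQ: "A = E \<oplus>\<^bsub>T2 R\<^esub> Q"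
    unfolding nil_clean_elem_def by auto
  obtain e1 e2 e3 e4 where Ee: "E = (e1, e2, e3, e4)" by (cases E) auto
  have Ei: "e1 \<in> carrier R" "e2 \<in> carrier R" "e3 = \<zero>" "e4 \<in> carrier R" "e1 \<otimes> e1 = e1" "e4 \<otimes> e4 = e4"
    using E unfolding Ee T2_idem by auto
  obtain q1 q2 q3 q4 where Qe: "Q = (q1, q2, q3, q4)" by (cases Q) auto
  obtain n where Qc: "Q \<in> carrier (T2 R)" and Qn: "Q [^]\<^bsub>T2 R\<^esub> (n::nat) = \<zero>\<^bsub>T2 R\<^esub>"
    using Q unfolding nilpotents_def by auto
  have Qi: "q1 \<in> carrier R" "q2 \<in> carrier R" "q3 = \<zero>" "q4 \<in> carrier R" using Qc unfolding Qe T2_carrier by auto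
  obtain w where w: "w \<in> carrier R" "Q [^]\<^bsub>T2 R\<^esub> n = (q1 [^] n, w, \<zero>, q4 [^] n)"
    using T2_pow[OF Qi(1,2,4), of n] Qe Qi(3) by auto
  have "(q1 [^] n, w, \<zero>, q4 [^] n) = \<zero>\<^bsub>T2 R\<^esub>" by (subst w(2)[symmetric]) (rule Qn)
  then have "q1 [^] n = \<zero>" "q4 [^] n = \<zero>" by (simp_all add: T2_zero)
  then have q14: "q1 = \<zero>" "q4 = \<zero>" using dom_nil[OF D Qi(1)] dom_nil[OF D Qi(4)] by auto
  have Aeq: "A = (e1, e2 \<oplus> q2, \<zero>, e4)" using AEQ Ee Qe Ei Qi q14 by (simp add: T2_add)
  show "uniquely_strongly_clean (T2 R) A"
    unfolding Aeq by (rule T2_usc[OF D dom_idem[OF D Ei(1) Ei(5)] dom_idem[OF D Ei(4) Ei(6)]]) (use Ei Qi in simp)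
qed

lemma (in ring) M2_neg:
  assumes ac: "a \<in> carrier R" "b \<in> carrier R" "c \<in> carrier R" "d \<in> carrier R"
  shows "\<ominus>\<^bsub>M2 R\<^esub> (a, b, c, d) = (\<ominus> a, \<ominus> b, \<ominus> c, \<ominus> d)"
proof (rule a_inv_eqI)
  show "(\<ominus> a, \<ominus> b, \<ominus> c, \<ominus> d) \<in> carrier (M2 R)" using ac by (simp add: M2_carrier)
  show "(a, b, c, d) \<oplus>\<^bsub>M2 R\<^esub> (\<ominus> a, \<ominus> b, \<ominus> c, \<ominus> d) = \<zero>\<^bsub>M2 R\<^esub>"
    using ac by (simp add: M2_add M2_zero r_neg)
  show "(\<ominus> a, \<ominus> b, \<ominus> c, \<ominus> d) \<oplus>\<^bsub>M2 R\<^esub> (a, b, c, d) = \<zero>\<^bsub>M2 R\<^esub>"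
    using ac by (simp add: M2_add M2_zero l_neg)
  fix y assume y: "y \<in> carrier (M2 R)" "(a, b, c, d) \<oplus>\<^bsub>M2 R\<^esub> y = \<zero>\<^bsub>M2 R\<^esub>"
  then obtain y1 y2 y3 y4 where yy: "y = (y1, y2, y3, y4)" "y1 \<in> carrier R" "y2 \<in> carrier R" "y3 \<in> carrier R" "y4 \<in> carrier R"
    by (auto simp: M2_carrier)
  have "a \<oplus> y1 = \<zero>" "b \<oplus> y2 = \<zero>" "c \<oplus> y3 = \<zero>" "d \<oplus> y4 = \<zero>" using y yy by (auto simp: M2_add M2_zero)
  then have "y1 \<oplus> a = \<zero>" "y2 \<oplus> b = \<zero>" "y3 \<oplus> c = \<zero>" "y4 \<oplus> d = \<zero>" using ac yy by (simp_all add: a_comm)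
  then have "\<ominus> a = y1" "\<ominus> b = y2" "\<ominus> c = y3" "\<ominus> d = y4" using ac yy by (simp_all add: minus_equality)
  then show "y = (\<ominus> a, \<ominus> b, \<ominus> c, \<ominus> d)" using yy by simp
qed

lemma (in ring) M2_minus:
  assumes "a \<in> carrier R" "b \<in> carrier R" "c \<in> carrier R" "d \<in> carrier R"
    "a' \<in> carrier R" "b' \<in> carrier R" "c' \<in> carrier R" "d' \<in> carrier R"
  shows "(a, b, c, d) \<ominus>\<^bsub>M2 R\<^esub> (a', b', c', d') = (a \<ominus> a', b \<ominus> b', c \<ominus> c', d \<ominus> d')"
  using assms by (simp add: a_minus_def M2_neg M2_add)

lemma (in ring) M2_not_NCSUC:
  assumes nz: "\<one> \<noteq> \<zero>" shows "\<not> NCSUC (M2 R)"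
proof
  assume N: "NCSUC (M2 R)"
  define A where "A = (\<one>, \<one>, \<one>, \<zero>)"
  define E where "E = (\<one>, \<one>, \<zero>, \<zero>)"
  define Q where "Q = (\<zero>, \<zero>, \<one>, \<zero>)"
  define B where "B = (\<zero>, \<one>, \<one>, \<ominus> \<one>)"
  have Ac: "A \<in> carrier (M2 R)" and Ec: "E \<in> carrier (M2 R)" and Qc: "Q \<in> carrier (M2 R)"
    and Bc: "B \<in> carrier (M2 R)"
    by (simp_all add: A_def E_def Q_def B_def M2_carrier)
  have "E \<otimes>\<^bsub>M2 R\<^esub> E = E" by (simp add: E_def M2_mult)
  then have Ei: "E \<in> idempotents (M2 R)" using Ec by (simp add: idempotents_def)
  have "Q [^]\<^bsub>M2 R\<^esub> (Suc (Suc 0)) = \<zero>\<^bsub>M2 R\<^esub>"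
    by (simp add: Q_def M2_mult M2_one M2_zero)
  then have Qn: "Q \<in> nilpotents (M2 R)" using Qc unfolding nilpotents_def by blast
  have "A = E \<oplus>\<^bsub>M2 R\<^esub> Q" by (simp add: A_def E_def Q_def M2_add)
  then have "nil_clean_elem (M2 R) A" using Ei Qn unfolding nil_clean_elem_def by blast
  then have usc: "uniquely_strongly_clean (M2 R) A" using N Ac unfolding NCSUC_def by blast
  have BA: "B \<otimes>\<^bsub>M2 R\<^esub> A = \<one>\<^bsub>M2 R\<^esub>" by (simp add: A_def B_def M2_mult M2_one l_neg r_neg)
  have AB: "A \<otimes>\<^bsub>M2 R\<^esub> B = \<one>\<^bsub>M2 R\<^esub>" by (simp add: A_def B_def M2_mult M2_one l_neg r_neg)
  have AU: "A \<in> Units (M2 R)" using Ac Bc AB BA unfolding Units_def by blast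
  have BU: "B \<in> Units (M2 R)" using Ac Bc AB BA unfolding Units_def by blast
  have A0: "A \<ominus>\<^bsub>M2 R\<^esub> \<zero>\<^bsub>M2 R\<^esub> = A" by (simp add: A_def M2_zero M2_minus ring_simprules)
  have A1: "A \<ominus>\<^bsub>M2 R\<^esub> \<one>\<^bsub>M2 R\<^esub> = B" by (simp add: A_def B_def M2_one M2_minus ring_simprules)
  have i0: "\<zero>\<^bsub>M2 R\<^esub> \<in> idempotents (M2 R)" by (simp add: idempotents_def M2_zero M2_mult M2_carrier)
  have i1: "\<one>\<^bsub>M2 R\<^esub> \<in> idempotents (M2 R)" by (simp add: idempotents_def M2_one M2_mult M2_carrier)
  have c0: "A \<otimes>\<^bsub>M2 R\<^esub> \<zero>\<^bsub>M2 R\<^esub> = \<zero>\<^bsub>M2 R\<^esub> \<otimes>\<^bsub>M2 R\<^esub> A" by (simp add: A_def M2_zero M2_mult)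
  have c1: "A \<otimes>\<^bsub>M2 R\<^esub> \<one>\<^bsub>M2 R\<^esub> = \<one>\<^bsub>M2 R\<^esub> \<otimes>\<^bsub>M2 R\<^esub> A" by (simp add: A_def M2_one M2_mult)
  have ne: "\<zero>\<^bsub>M2 R\<^esub> \<noteq> \<one>\<^bsub>M2 R\<^esub>" using nz by (simp add: M2_zero M2_one)
  show False using usc unfolding uniquely_strongly_clean_def
    using i0 i1 c0 c1 A0 A1 AU BU ne by metis
qed

theorem mainTheorem19:
  shows "(\<forall>R :: ('a, 'b) ring_scheme. ring R \<and> reduced_ring R \<longrightarrow> NCSUC R)
       \<and> (\<forall>R :: ('c, 'd) ring_scheme. ring R \<and> local_ring R \<longrightarrow> NCSUC R)
       \<and> (\<forall>R :: ('e, 'f) ring_scheme. ring R \<and> nc_domain R \<longrightarrow> NCSUC (T2 R))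
       \<and> (\<forall>R :: ('g, 'h) ring_scheme. ring R \<and> \<one>\<^bsub>R\<^esub> \<noteq> \<zero>\<^bsub>R\<^esub> \<longrightarrow> \<not> NCSUC (M2 R))"
proof (intro conjI allI impI)
  fix R :: "('a, 'b) ring_scheme" assume "ring R \<and> reduced_ring R"
  then show "NCSUC R" using reduced_NCSUC by blast
next
  fix R :: "('c, 'd) ring_scheme" assume "ring R \<and> local_ring R"
  then show "NCSUC R" using ring.local_NCSUC by blast
next
  fix R :: "('e, 'f) ring_scheme" assume "ring R \<and> nc_domain R"
  then show "NCSUC (T2 R)" using ring.T2_NCSUC by blast
next
  fix R :: "('g, 'h) ring_scheme" assume "ring R \<and> \<one>\<^bsub>R\<^esub> \<noteq> \<zero>\<^bsub>R\<^esub>"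
  then show "\<not> NCSUC (M2 R)" using ring.M2_not_NCSUC by blast
qed

end
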